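(* Let $k\ge 2$ and let $\mathcal{H}=(V,E)$ be a hypergraph such that: $\mathcal{H}$ is linear and $k$-uniform; $|V|=k^2$; $|E|=k^2+1$; and there is a hyperedge $e_0\in E$ such that $\mathrm{deg}_{\mathcal{H}}(x)=k+1$ for all $x\in e_0$ and $\mathrm{deg}_{\mathcal{H}}(x)\ge k$ for all $x\in V\smallsetminus e_0$. Then (i) $\Delta([\mathcal{H}]_2)=k^2-1$ and $\delta([\mathcal{H}]_2)=k^2-k$; (ii) $k+1\le \mathrm{q}(\mathcal{H})\le 1+k\lceil k/2\rceil$; (iii) $\mathrm{q}(\mathcal{H})\le \Delta([\mathcal{H}]_2)$.
   Context: A hypergraph $\mathcal{H}=(V,E)$ has a finite vertex set $V$ and a finite set $E$ of nonempty subsets of $V$ (hyperedges). It is linear if $|e\cap e'|\le1$ for distinct hyperedges, $k$-uniform if every hyperedge has exactly $k$ elements. $\mathrm{deg}_{\mathcal{H}}(x)$ is the number of hyperedges containing $x$. The 2-section $[\mathcal{H}]_2$ is the simple graph on $V$ where distinct vertices are adjacent iff some hyperedge contains both; $\Delta([\mathcal{H}]_2)$ and $\delta([\mathcal{H}]_2)$ are its maximum and minimum degrees. The chromatic index $\mathrm{q}(\mathcal{H})$ is the least number of colors in a coloring of the hyperedges in which distinct intersecting hyperedges get different colors. *)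

theory Defs
  imports Complex_Main
begin

definition hypergraph :: "'a set \<Rightarrow> 'a set set \<Rightarrow> bool" where
  "hypergraph V E \<longleftrightarrow> finite V \<and> finite E \<and> (\<forall>e\<in>E. e \<noteq> {} \<and> e \<subseteq> V)"

definition linear_hg :: "'a set set \<Rightarrow> bool" where
  "linear_hg E \<longleftrightarrow> (\<forall>e\<in>E. \<forall>e'\<in>E. e \<noteq> e' \<longrightarrow> card (e \<inter> e') \<le> 1)"

definition uniform_hg :: "nat \<Rightarrow> 'a set set \<Rightarrow> bool" where
  "uniform_hg k E \<longleftrightarrow> (\<forall>e\<in>E. card e = k)"

definition hdeg :: "'a set set \<Rightarrow> 'a \<Rightarrow> nat" where
  "hdeg E x = card {e\<in>E. x \<in> e}"

definition sec2_nbrs :: "'a set \<Rightarrow> 'a set set \<Rightarrow> 'a \<Rightarrow> 'a set" where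
  "sec2_nbrs V E x = {y\<in>V. y \<noteq> x \<and> (\<exists>e\<in>E. x \<in> e \<and> y \<in> e)}"

definition sec2_deg :: "'a set \<Rightarrow> 'a set set \<Rightarrow> 'a \<Rightarrow> nat" where
  "sec2_deg V E x = card (sec2_nbrs V E x)"

definition sec2_maxdeg :: "'a set \<Rightarrow> 'a set set \<Rightarrow> nat" where
  "sec2_maxdeg V E = Max (sec2_deg V E ` V)"

definition sec2_mindeg :: "'a set \<Rightarrow> 'a set set \<Rightarrow> nat" where
  "sec2_mindeg V E = Min (sec2_deg V E ` V)"

definition proper_edge_coloring :: "'a set set \<Rightarrow> nat \<Rightarrow> ('a set \<Rightarrow> nat) \<Rightarrow> bool" where
  "proper_edge_coloring E n c \<longleftrightarrow> (\<forall>e\<in>E. c e < n) \<and>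
     (\<forall>e\<in>E. \<forall>e'\<in>E. e \<noteq> e' \<and> e \<inter> e' \<noteq> {} \<longrightarrow> c e \<noteq> c e')"

definition chromatic_index :: "'a set set \<Rightarrow> nat" where
  "chromatic_index E = (LEAST n. \<exists>c. proper_edge_coloring E n c)"

end

theory Submission
  imports Defs
begin

locale hg36 =
  fixes V :: "'a set" and E :: "'a set set" and k :: nat and e0 :: "'a set"
  assumes k2: "k \<ge> 2" and hg: "hypergraph V E" and lin: "linear_hg E" and uni: "uniform_hg k E"
  and cV: "card V = k^2" and cE: "card E = k^2+1" and e0E: "e0 \<in> E"
  and deg0: "\<forall>x\<in>e0. hdeg E x = k+1" and deg1: "\<forall>x\<in>V-e0. hdeg E x \<ge> k"
begin

lemma finV: "finite V" and finE: "finite E" and sub: "e \<in> E \<Longrightarrow> e \<subseteq> V"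
  using hg unfolding hypergraph_def by auto

lemma fin_e: "e \<in> E \<Longrightarrow> finite e"
  using finite_subset sub finV by blast

lemma card_e: "e \<in> E \<Longrightarrow> card e = k"
  using uni unfolding uniform_hg_def by auto

lemma lin2:
  assumes "e\<in>E" "e'\<in>E" "x\<in>e" "x\<in>e'" "y\<in>e" "y\<in>e'" "x\<noteq>y"
  shows "e = e'"
proof (rule ccontr)
  assume "e \<noteq> e'"
  then have "card (e\<inter>e') \<le> 1" using lin assms unfolding linear_hg_def by auto
  moreover have "card {x,y} \<le> card (e\<inter>e')"
    by (rule card_mono) (use assms fin_e in auto)
  ultimately show False using assms by simp
qed

definition C where "C z = {e\<in>E. z\<in>e} - {e0}"

lemma card_C: "z\<in>e0 \<Longrightarrow> card (C z) = k"
proof -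
  assume z: "z\<in>e0"
  have "card {e\<in>E. z\<in>e} = k+1" using deg0 z unfolding hdeg_def by auto
  moreover have "e0 \<in> {e\<in>E. z\<in>e}" using z e0E by auto
  ultimately show ?thesis unfolding C_def by (simp add: card_Diff_singleton)
qed

lemma finC: "finite (C z)" unfolding C_def using finE by auto

lemma card_e0: "card e0 = k" using card_e e0E .
lemma fin_e0: "finite e0" using fin_e e0E .

lemma e0_int: "e\<in>E \<Longrightarrow> e\<noteq>e0 \<Longrightarrow> z\<in>e0 \<Longrightarrow> z\<in>e \<Longrightarrow> z'\<in>e0 \<Longrightarrow> z'\<in>e \<Longrightarrow> z=z'"
  using lin2 e0E by blast

lemma F1: assumes "e\<in>E" "e\<noteq>e0" shows "\<exists>z\<in>e0. z\<in>e"
proof -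
  have s: "(\<Union>z\<in>e0. C z) \<subseteq> E - {e0}" unfolding C_def by auto
  have "card (\<Union>z\<in>e0. C z) = (\<Sum>z\<in>e0. card (C z))"
  proof (rule card_UN_disjoint)
    show "\<forall>i\<in>e0. \<forall>j\<in>e0. i \<noteq> j \<longrightarrow> C i \<inter> C j = {}"
    proof (intro ballI impI)
      fix i j assume ij: "i\<in>e0" "j\<in>e0" "i\<noteq>j"
      show "C i \<inter> C j = {}"
      proof (rule ccontr)
        assume "C i \<inter> C j \<noteq> {}"
        then obtain e where "e\<in>E" "e\<noteq>e0" "i\<in>e" "j\<in>e" unfolding C_def by blast
        then show False using e0_int[of e i j] ij by blast
      qed
    qed
  qed (use fin_e0 finC in auto)
  also have "\<dots> = (\<Sum>z\<in>e0. k)" by (rule sum.cong) (auto simp only: card_C)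
  also have "\<dots> = k*k" using card_e0 by (simp only: sum_constant) simp
  also have "\<dots> = card (E - {e0})"
  proof -
    have "card (E - {e0}) = card E - 1" using e0E finE by (simp add: card_Diff_singleton)
    then show ?thesis using cE by (simp add: power2_eq_square)
  qed
  finally have cc: "card (\<Union>z\<in>e0. C z) = card (E - {e0})" .
  have "(\<Union>z\<in>e0. C z) = E - {e0}"
    by (rule card_subset_eq[OF _ s cc]) (use finE in blast)
  moreover have "e \<in> E - {e0}" using assms by simp
  ultimately have "e \<in> (\<Union>z\<in>e0. C z)" by simp
  then obtain z where "z\<in>e0" "e \<in> C z" by blast
  then show ?thesis unfolding C_def by blast
qed

lemma U_main:
  assumes y: "y\<in>V-e0"
  shows "card {b\<in>E. y\<in>b} = k \<and> (\<forall>z\<in>e0. \<exists>b\<in>E. z\<in>b \<and> y\<in>b)"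
proof -
  define Ey where "Ey = {b\<in>E. y\<in>b}"
  define \<phi> where "\<phi> b = (SOME z. z\<in>e0 \<and> z\<in>b)" for b
  have ph: "\<phi> b \<in> e0 \<and> \<phi> b \<in> b" if "b\<in>Ey" for b
  proof -
    have "b \<noteq> e0" using that y unfolding Ey_def by auto
    then have "\<exists>z. z\<in>e0 \<and> z\<in>b" using F1 that unfolding Ey_def by auto
    then show ?thesis unfolding \<phi>_def by (rule someI_ex)
  qed
  have inj: "inj_on \<phi> Ey"
  proof (rule inj_onI)
    fix b1 b2 assume bb: "b1\<in>Ey" "b2\<in>Ey" "\<phi> b1 = \<phi> b2"
    have p1: "\<phi> b1 \<in> e0" "\<phi> b1 \<in> b1" using ph[OF bb(1)] by simp_all
    have p2: "\<phi> b1 \<in> b2" using ph[OF bb(2)] bb(3) by simp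
    have yb: "b1\<in>E" "y\<in>b1" "b2\<in>E" "y\<in>b2" using bb(1,2) unfolding Ey_def by simp_all
    have ne: "\<phi> b1 \<noteq> y" using p1(1) y by blast
    show "b1 = b2" by (rule lin2[OF yb(1) yb(3) p1(2) p2 yb(2) yb(4) ne])
  qed
  have fEy: "finite Ey" using finE unfolding Ey_def by auto
  have im: "\<phi> ` Ey \<subseteq> e0" using ph by auto
  have c1: "card (\<phi> ` Ey) = card Ey" using card_image[OF inj] .
  have "card Ey \<ge> k" using deg1 y unfolding hdeg_def Ey_def by auto
  moreover have "card (\<phi> ` Ey) \<le> k" using card_mono[OF fin_e0 im] card_e0 by simp
  ultimately have ck: "card Ey = k" using c1 by simp
  then have "\<phi> ` Ey = e0" using card_subset_eq[OF fin_e0 im] c1 card_e0 by simp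
  have ex: "\<forall>z\<in>e0. \<exists>b\<in>E. z\<in>b \<and> y\<in>b"
  proof
    fix z assume "z\<in>e0"
    then have "z \<in> \<phi> ` Ey" using \<open>\<phi> ` Ey = e0\<close> by simp
    then obtain b where b: "b\<in>Ey" "z = \<phi> b" by blast
    then have "z\<in>b" using ph[OF b(1)] by simp
    then show "\<exists>b\<in>E. z\<in>b \<and> y\<in>b" using b(1) unfolding Ey_def by blast
  qed
  show ?thesis using ck ex unfolding Ey_def by blast
qed

lemma K:
  assumes z: "z\<in>e0" and z': "z'\<in>e0" and zz: "z\<noteq>z'" and e: "e\<in>C z"
  shows "\<exists>!b. b\<in>C z' \<and> b\<inter>e={}"
proof -
  have eE: "e\<in>E" "e\<noteq>e0" "z\<in>e" using e unfolding C_def by auto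
  define Y where "Y = e - {z}"
  have Ysub: "Y \<subseteq> V - e0"
  proof
    fix y assume "y\<in>Y"
    then have y: "y\<in>e" "y\<noteq>z" unfolding Y_def by simp_all
    have "y\<in>V" using sub[OF eE(1)] y(1) by blast
    moreover have "y\<notin>e0" using e0_int[OF eE(1,2) z eE(3) _ y(1)] y(2) by blast
    ultimately show "y \<in> V - e0" by simp
  qed
  have cY: "card Y = k - 1" unfolding Y_def using card_e[OF eE(1)] eE(3) fin_e[OF eE(1)] by simp
  define h where "h y = (SOME b. b\<in>E \<and> z'\<in>b \<and> y\<in>b)" for y
  have hp: "h y \<in> C z' \<and> y \<in> h y" if yY: "y\<in>Y" for y
  proof -
    have yV: "y \<in> V - e0" using Ysub yY by blast
    have "\<exists>b\<in>E. z'\<in>b \<and> y\<in>b" using U_main[OF yV] z' by blast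
    then have "\<exists>b. b\<in>E \<and> z'\<in>b \<and> y\<in>b" by blast
    then have hh: "h y\<in>E \<and> z'\<in>h y \<and> y\<in>h y" unfolding h_def by (rule someI_ex)
    have "h y \<noteq> e0" using hh yV by blast
    then show ?thesis using hh unfolding C_def by blast
  qed
  have z'e: "z' \<notin> e"
  proof
    assume "z'\<in>e" then have "z = z'" using e0_int[OF eE(1,2) z eE(3) z'] by simp
    then show False using zz by simp
  qed
  define M where "M = {b\<in>C z'. b\<inter>e \<noteq> {}}"
  have MY: "M = h ` Y"
  proof
    show "h ` Y \<subseteq> M"
    proof
      fix b assume "b \<in> h ` Y"
      then obtain y where y: "y\<in>Y" "b = h y" by blast
      then have "y \<in> b \<inter> e" using hp[OF y(1)] unfolding Y_def by blast
      then show "b \<in> M" unfolding M_def using hp[OF y(1)] y(2) by blast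
    qed
  next
    show "M \<subseteq> h ` Y"
    proof
      fix b assume "b \<in> M"
      then obtain w where b: "b\<in>E" "b\<noteq>e0" "z'\<in>b" "w\<in>b" "w\<in>e" unfolding M_def C_def by blast
      have "w \<noteq> z"
      proof
        assume "w = z" then have "z' = z" using e0_int[OF b(1,2) z' b(3) z] b(4) by simp
        then show False using zz by simp
      qed
      then have wY: "w\<in>Y" using b(5) unfolding Y_def by simp
      then have "w \<notin> e0" using Ysub by blast
      then have ne: "z' \<noteq> w" using z' by blast
      have hw: "h w \<in> E" "z' \<in> h w" "w \<in> h w" using hp[OF wY] unfolding C_def by simp_all
      have "b = h w" by (rule lin2[OF b(1) hw(1) b(3) hw(2) b(4) hw(3) ne])
      then show "b \<in> h ` Y" using wY by blast
    qed
  qed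
  have injh: "inj_on h Y"
  proof (rule inj_onI)
    fix y1 y2 assume a: "y1\<in>Y" "y2\<in>Y" "h y1 = h y2"
    show "y1 = y2"
    proof (rule ccontr)
      assume ne: "y1 \<noteq> y2"
      have h1: "h y1 \<in> E" "y1 \<in> h y1" "z' \<in> h y1" using hp[OF a(1)] unfolding C_def by simp_all
      have h2: "y2 \<in> h y1" using hp[OF a(2)] a(3) by simp
      have ye: "y1 \<in> e" "y2 \<in> e" using a(1,2) unfolding Y_def by simp_all
      have "h y1 = e" by (rule lin2[OF h1(1) eE(1) h1(2) ye(1) h2 ye(2) ne])
      then show False using h1(3) z'e by simp
    qed
  qed
  have cM: "card M = k - 1" unfolding MY using card_image[OF injh] cY by simp
  have MC: "M \<subseteq> C z'" unfolding M_def by blast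
  have "card (C z' - M) = card (C z') - card M" by (rule card_Diff_subset[OF finite_subset[OF MC finC] MC])
  then have "card (C z' - M) = Suc 0" using cM card_C[OF z'] k2 by simp
  then obtain b where bb: "C z' - M = {b}" unfolding card_1_singleton_iff by blast
  have "C z' - M = {b\<in>C z'. b\<inter>e={}}" unfolding M_def by blast
  then have "{b\<in>C z'. b\<inter>e={}} = {b}" using bb by simp
  then show ?thesis by (metis (mono_tags, lifting) mem_Collect_eq singletonD singletonI)
qed

lemma e0sub: "e0 \<subseteq> V" using sub e0E .

lemma nb0: assumes x: "x\<in>e0" shows "sec2_deg V E x = k^2 - 1"
proof -
  have "sec2_nbrs V E x = V - {x}"
  proof -
    have "y \<in> sec2_nbrs V E x" if "y\<in>V" "y\<noteq>x" for y
    proof (cases "y\<in>e0")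
      case True then show ?thesis using that x e0E unfolding sec2_nbrs_def by auto
    next
      case False then show ?thesis using U_main[of y] that x unfolding sec2_nbrs_def by auto
    qed
    then show ?thesis unfolding sec2_nbrs_def by auto
  qed
  then show ?thesis unfolding sec2_deg_def using cV x e0sub finV by (auto simp: card_Diff_singleton)
qed

lemma nb1: assumes y: "y\<in>V-e0" shows "sec2_deg V E y = k^2 - k"
proof -
  define Ey where "Ey = {b\<in>E. y\<in>b}"
  have "sec2_nbrs V E y = (\<Union>b\<in>Ey. b - {y})" unfolding sec2_nbrs_def Ey_def using sub by auto
  moreover have "card (\<Union>b\<in>Ey. b - {y}) = (\<Sum>b\<in>Ey. card (b - {y}))"
  proof (rule card_UN_disjoint)
    show "\<forall>b\<in>Ey. \<forall>j\<in>Ey. b\<noteq>j \<longrightarrow> (b-{y})\<inter>(j-{y}) = {}" using lin2 unfolding Ey_def by blast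
  qed (use finE fin_e in \<open>auto simp: Ey_def\<close>)
  moreover have "(\<Sum>b\<in>Ey. card (b - {y})) = (\<Sum>b\<in>Ey. k - 1)"
    by (rule sum.cong) (auto simp: Ey_def card_e fin_e)
  moreover have "card Ey = k" using U_main[OF y] unfolding Ey_def by auto
  ultimately show ?thesis unfolding sec2_deg_def by (simp add: power2_eq_square diff_mult_distrib2)
qed

lemma Ve0: "\<exists>y. y \<in> V - e0"
proof -
  have "card e0 < card V" using card_e0 cV k2 by (simp add: power2_eq_square)
  then show ?thesis using card_mono[OF fin_e0, of V] by fastforce
qed

lemma e0ne: "\<exists>x. x \<in> e0"
proof -
  have "e0 \<noteq> {}" using card_e0 k2 by auto
  then show ?thesis by blast
qed

lemma partI: "sec2_maxdeg V E = k^2 - 1 \<and> sec2_mindeg V E = k^2 - k"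
proof
  have d: "sec2_deg V E x \<in> {k^2-1, k^2-k}" if "x\<in>V" for x
    using nb0 nb1 that by (cases "x\<in>e0") auto
  obtain x where x: "x\<in>e0" using e0ne by auto
  obtain y where y: "y\<in>V-e0" using Ve0 by auto
  have le: "k^2 - k \<le> k^2 - 1" using k2 by simp
  show "sec2_maxdeg V E = k^2 - 1" unfolding sec2_maxdeg_def
  proof (rule Max_eqI)
    show "k\<^sup>2 - 1 \<in> sec2_deg V E ` V" using nb0[OF x] x e0sub by (metis image_eqI subsetD)
  qed (use finV d le in force)+
  show "sec2_mindeg V E = k^2 - k" unfolding sec2_mindeg_def
  proof (rule Min_eqI)
    show "k\<^sup>2 - k \<in> sec2_deg V E ` V" using nb1[OF y] y by (metis DiffD1 image_eqI)
  qed (use finV d le in force)+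
qed

lemma lower: assumes "proper_edge_coloring E n c" shows "k+1 \<le> n"
proof -
  obtain x where x: "x\<in>e0" using e0ne by auto
  define S where "S = {e\<in>E. x\<in>e}"
  have cS: "card S = k+1" using deg0 x unfolding S_def hdeg_def by auto
  have "inj_on c S" using assms unfolding proper_edge_coloring_def S_def inj_on_def by blast
  then have "card (c ` S) = k+1" using cS card_image by metis
  moreover have "c ` S \<subseteq> {0..<n}" using assms unfolding proper_edge_coloring_def S_def by auto
  ultimately show ?thesis using card_mono[of "{0..<n}" "c ` S"] by simp
qed


lemma arith_blk: "t < (k::nat) \<Longrightarrow> t' < k \<Longrightarrow> k*a + t = k*a' + t' \<Longrightarrow> a = a' \<and> t = t'"
proof -
  assume a: "t < k" "t' < k" "k*a + t = k*a' + t'"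
  have k0: "k > 0" using a by auto
  have d1: "(k*a + t) div k = a" using a(1) k0 by (simp add: div_add1_eq)
  have d2: "(k*a' + t') div k = a'" using a(2) k0 by (simp add: div_add1_eq)
  have m1: "(k*a + t) mod k = t" "(k*a' + t') mod k = t'" using a(1,2) by auto
  have "a = a'" using d1 d2 a(3) by metis
  moreover have "t = t'" using m1 a(3) by metis
  ultimately show ?thesis by simp
qed

lemma coloring_exists: "\<exists>c. proper_edge_coloring E (1 + k*((k+1) div 2)) c"
proof -
  obtain g where g: "bij_betw g {0..<k} e0" using ex_bij_betw_nat_finite[OF fin_e0] card_e0 by auto
  have gin: "i<k \<Longrightarrow> g i \<in> e0" for i using g bij_betwE by fastforce
  have ginj: "i<k \<Longrightarrow> j<k \<Longrightarrow> g i = g j \<Longrightarrow> i = j" for i j using g unfolding bij_betw_def inj_on_def by auto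
  have "\<forall>z\<in>e0. \<exists>q. bij_betw q (C z) {0..<k}"
    using ex_bij_betw_finite_nat[OF finC] card_C by metis
  then obtain P where P: "\<And>z. z\<in>e0 \<Longrightarrow> bij_betw (P z) (C z) {0..<k}" by metis
  have Pk: "z\<in>e0 \<Longrightarrow> e\<in>C z \<Longrightarrow> P z e < k" for z e using P bij_betwE by fastforce
  have Pinj: "z\<in>e0 \<Longrightarrow> e\<in>C z \<Longrightarrow> e'\<in>C z \<Longrightarrow> P z e = P z e' \<Longrightarrow> e = e'" for z e e'
    using P unfolding bij_betw_def inj_on_def by blast
  define idx where "idx e = (THE i. i<k \<and> g i \<in> e)" for e
  have idx1: "\<exists>!i. i<k \<and> g i \<in> e" if ee: "e\<in>E" "e\<noteq>e0" for e
  proof -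
    obtain z where z: "z\<in>e0" "z\<in>e" using F1 ee by auto
    then obtain i where "i<k" "g i = z" using g unfolding bij_betw_def by auto
    moreover have "j<k \<Longrightarrow> g j \<in> e \<Longrightarrow> j = i" for j
      using e0_int[OF ee z(1) z(2) gin] ginj calculation by metis
    ultimately show ?thesis using z by blast
  qed
  have idx2: "idx e < k \<and> g (idx e) \<in> e" if "e\<in>E" "e\<noteq>e0" for e
    unfolding idx_def using theI'[OF idx1[OF that]] .
  have idx3: "idx e = i" if "e\<in>C (g i)" "i<k" for e i
  proof -
    have "e\<in>E" "e\<noteq>e0" "g i \<in> e" using that unfolding C_def by auto
    then show ?thesis using idx1 idx2 that by metis
  qed
  have idxC: "e\<in>C (g (idx e))" if "e\<in>E" "e\<noteq>e0" for e using idx2[OF that] that unfolding C_def by auto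
  define partner where "partner e = (THE b. b\<in>C (g (idx e - 1)) \<and> b \<inter> e = {})" for e
  have Kg: "\<exists>!b. b\<in>C (g j) \<and> b\<inter>e={}" if "e\<in>C (g i)" "i<k" "j<k" "i\<noteq>j" for e i j
    using K[OF gin gin _ that(1)] ginj that by metis
  have part: "partner e \<in> C (g (idx e - 1)) \<and> partner e \<inter> e = {}" if "e\<in>E" "e\<noteq>e0" "odd (idx e)" for e
  proof -
    have j: "idx e - 1 \<noteq> idx e" "idx e - 1 < k" using that(3) idx2[OF that(1,2)] by (auto elim: oddE)
    have u: "\<exists>!b. b\<in>C (g (idx e - 1)) \<and> b\<inter>e={}"
      by (rule Kg[OF idxC[OF that(1,2)] conjunct1[OF idx2[OF that(1,2)]] j(2) not_sym[OF j(1)]])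
    show ?thesis unfolding partner_def by (rule theI'[OF u])
  qed
  define off where "off e = (if even (idx e) then P (g (idx e)) e else P (g (idx e - 1)) (partner e))" for e
  have offk: "off e < k" if "e\<in>E" "e\<noteq>e0" for e
  proof (cases "even (idx e)")
    case True then show ?thesis unfolding off_def using Pk gin idx2[OF that] idxC[OF that] by auto
  next
    case False then show ?thesis unfolding off_def using Pk gin idx2[OF that] part[OF that] by auto
  qed
  define col where "col e = (if e = e0 then 0 else Suc (k*(idx e div 2) + off e))" for e
  have "proper_edge_coloring E (1 + k*((k+1) div 2)) col"
    unfolding proper_edge_coloring_def
  proof (intro conjI ballI impI)
    fix e assume e: "e\<in>E"
    show "col e < 1 + k*((k+1) div 2)"
    proof (cases "e = e0")
      case False
      have il: "idx e < k" using idx2[OF e False] by simp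
      have "idx e div 2 + 1 \<le> (k+1) div 2" using il by presburger
      then have "k*(idx e div 2) + k \<le> k*((k+1) div 2)"
        by (metis add_mult_distrib2 mult.right_neutral mult_le_mono2)
      then show ?thesis unfolding col_def using offk[OF e False] False by simp
    qed (simp add: col_def)
  next
    fix e e' assume e: "e\<in>E" and e': "e'\<in>E" and ne: "e \<noteq> e' \<and> e \<inter> e' \<noteq> {}"
    show "col e \<noteq> col e'"
    proof
      assume eq: "col e = col e'"
      have n0: "e \<noteq> e0" "e' \<noteq> e0" using eq ne unfolding col_def by (auto split: if_splits)
      then have "k*(idx e div 2) + off e = k*(idx e' div 2) + off e'" using eq unfolding col_def by simp
      then have ab0: "idx e div 2 = idx e' div 2 \<and> off e = off e'"
        by (rule arith_blk[OF offk[OF e n0(1)] offk[OF e' n0(2)]])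
      then have ab: "idx e div 2 = idx e' div 2" "off e = off e'" by simp_all
      have i1: "idx e < k" "idx e' < k" using idx2 n0 e e' by auto
      show False
      proof (cases "even (idx e)"; cases "even (idx e')")
        assume a: "even (idx e)" "even (idx e')"
        then have "idx e = idx e'" using ab by presburger
        then show False using Pinj[OF gin[OF i1(1)] idxC[OF e n0(1)], of e'] idxC[OF e' n0(2)] ab a ne
          unfolding off_def by simp
      next
        assume a: "even (idx e)" "odd (idx e')"
        then have "idx e = idx e' - 1" using ab by presburger
        then have "e = partner e'" using Pinj[OF gin[OF i1(1)] idxC[OF e n0(1)], of "partner e'"] 
            part[OF e' n0(2) a(2)] ab a unfolding off_def by simp
        then show False using part[OF e' n0(2) a(2)] ne by (simp add: Int_commute)
      next
        assume a: "odd (idx e)" "even (idx e')"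
        then have "idx e' = idx e - 1" using ab by presburger
        then have "e' = partner e" using Pinj[OF gin[OF i1(2)] idxC[OF e' n0(2)], of "partner e"] 
            part[OF e n0(1) a(1)] ab a unfolding off_def by simp
        then show False using part[OF e n0(1) a(1)] ne by (simp add: Int_commute)
      next
        assume a: "odd (idx e)" "odd (idx e')"
        then have ii: "idx e = idx e'" using ab by presburger
        have j: "idx e - 1 < k" "idx e - 1 \<noteq> idx e" using i1 a by (auto elim: oddE)
        have "partner e = partner e'" using Pinj[OF gin[OF j(1)], of "partner e" "partner e'"]
            part[OF e n0(1) a(1)] part[OF e' n0(2) a(2)] ii ab a unfolding off_def by simp
        have p1: "partner e \<in> C (g (idx e - 1))" "partner e \<inter> e = {}" using part[OF e n0(1) a(1)] by simp_all
        have d2: "partner e \<inter> e' = {}" using part[OF e' n0(2) a(2)] \<open>partner e = partner e'\<close> by simp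
        have d1: "e \<inter> partner e = {}" "e' \<inter> partner e = {}" using p1(2) d2 by (simp_all add: Int_commute)
        have u: "\<exists>!b. b\<in>C (g (idx e)) \<and> b \<inter> partner e = {}"
          by (rule Kg[OF p1(1) j(1) i1(1) j(2)])
        have c1: "e \<in> C (g (idx e))" "e' \<in> C (g (idx e))" using idxC[OF e n0(1)] idxC[OF e' n0(2)] ii by simp_all
        from u obtain b0 where b0: "\<And>b. b\<in>C (g (idx e)) \<and> b \<inter> partner e = {} \<Longrightarrow> b = b0"
          by (elim ex1E) blast
        have "e = e'" using b0[of e] b0[of e'] c1 d1 by simp
        then show False using ne by simp
      qed
    qed
  qed
  then show ?thesis by blast
qed

lemma ceil_half: "nat (ceiling (real k / 2)) = (k+1) div 2"
proof -
  have "ceiling (real k / 2) = int ((k+1) div 2)"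
  proof (rule ceiling_unique)
    define m where "m = (k+1) div 2"
    have h1: "2*m \<le> k+1" "k \<le> 2*m" unfolding m_def by presburger+
    have "real (2*m) \<le> real (k+1)" using h1(1) by (simp only: of_nat_le_iff)
    moreover have "real k \<le> real (2*m)" using h1(2) by (simp only: of_nat_le_iff)
    ultimately have "2 * real m \<le> real k + 1" "real k \<le> 2 * real m" by simp_all
    then show "real_of_int (int ((k + 1) div 2)) - 1 < real k / 2" "real k / 2 \<le> real_of_int (int ((k + 1) div 2))"
      unfolding m_def[symmetric] by simp_all
  qed
  then show ?thesis by simp
qed

lemma bound_le: "1 + k*((k+1) div 2) \<le> k^2 - 1"
proof (cases "even k")
  case True
  then obtain m where m: "k = 2*m" by blast
  then have m1: "m \<ge> 1" using k2 by simp
  then have mm: "m*m \<ge> 1" by simp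
  have e1: "(k+1) div 2 = m" using m by simp
  have e2: "k^2 = 4*(m*m)" using m by (simp add: power2_eq_square)
  have e3: "k*m = 2*(m*m)" using m by simp
  have e4: "1 + 2*(m*m) \<le> 4*(m*m) - 1" using mm by linarith
  show ?thesis unfolding e1 e2 e3 by (rule e4)
next
  case False
  then obtain m where m: "k = 2*m+1" using oddE by blast
  then have m1: "m \<ge> 1" using k2 by simp
  then have mm: "m*m \<ge> 1" by simp
  have "(k+1) div 2 = m+1" using m by simp
  moreover have "k^2 = 4*(m*m) + 4*m + 1" using m by (simp add: power2_eq_square algebra_simps)
  moreover have "k*(m+1) = 2*(m*m) + 3*m + 1" using m by (simp add: algebra_simps)
  moreover have "2 \<le> m + 2*(m*m)" using mm by linarith
  ultimately show ?thesis by simp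
qed

end

theorem theorem3p6:
  fixes V :: "'a set" and E :: "'a set set" and k :: nat and e0 :: "'a set"
  assumes "k \<ge> 2"
    and "hypergraph V E"
    and "linear_hg E"
    and "uniform_hg k E"
    and "card V = k ^ 2"
    and "card E = k ^ 2 + 1"
    and "e0 \<in> E"
    and "\<forall>x\<in>e0. hdeg E x = k + 1"
    and "\<forall>x\<in>V - e0. hdeg E x \<ge> k"
  shows "(sec2_maxdeg V E = k ^ 2 - 1 \<and> sec2_mindeg V E = k ^ 2 - k)
    \<and> (k + 1 \<le> chromatic_index E \<and> chromatic_index E \<le> 1 + k * nat (ceiling (real k / 2)))
    \<and> chromatic_index E \<le> sec2_maxdeg V E"
proof -
  interpret H: hg36 V E k e0 using assms by unfold_locales
  obtain c where c: "proper_edge_coloring E (1 + k*((k+1) div 2)) c" using H.coloring_exists by blast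
  have up: "chromatic_index E \<le> 1 + k*((k+1) div 2)" unfolding chromatic_index_def
    by (rule Least_le) (use c in blast)
  have "\<exists>c. proper_edge_coloring E (chromatic_index E) c" unfolding chromatic_index_def
    using LeastI_ex[of "\<lambda>n. \<exists>c. proper_edge_coloring E n c"] c by blast
  then have lo: "k + 1 \<le> chromatic_index E" using H.lower by blast
  have A: "sec2_maxdeg V E = k ^ 2 - 1 \<and> sec2_mindeg V E = k ^ 2 - k" by (rule H.partI)
  have B: "chromatic_index E \<le> 1 + k * nat (ceiling (real k / 2))" using up unfolding H.ceil_half .
  have C: "chromatic_index E \<le> sec2_maxdeg V E" using up H.bound_le A by linarith
  show ?thesis using A B C lo by blast
qed

end
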